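(* Let $1\le k\le n$ and $p=c_n^k$. Suppose $X$ is a real symmetric $n\times n$ matrix given together with a diagonalization $X=Q\Lambda Q^{\intercal}$ ($Q$ orthogonal, $\Lambda$ diagonal). Then there is an algorithm that computes the vector $v\in\mathbb{R}^n$ with $v_i=p|_{\{i\}}(X)$ for all $i\in[n]$ using $O(n^{\omega})$ floating point operations.
   Context: $c_n^k(X)=\sum_{S\subseteq[n],|S|=k}\det(X|_S)$ with $X|_S$ the principal submatrix indexed by $S$; $p|_{\{i\}}(X)=\sum_{|S|=k,\,i\in S}\det(X|_S)$. $\omega$ is the matrix multiplication exponent. *)

theory Defs
  imports Complex_Main "HOL-Combinatorics.Permutations"
begin

text \<open>Matrices of varying size n are functions nat => nat => real, indices 0..n-1.
  The determinant of the principal submatrix X|_S is written out by the Leibniz formula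
  (which is what the library determinant unfolds to).\<close>

definition principal_minor :: "(nat \<Rightarrow> nat \<Rightarrow> real) \<Rightarrow> nat set \<Rightarrow> real" where
  "principal_minor X S = (\<Sum>\<pi> | \<pi> permutes S. of_int (sign \<pi>) * (\<Prod>i\<in>S. X i (\<pi> i)))"

definition elem_sym_minor :: "nat \<Rightarrow> nat \<Rightarrow> (nat \<Rightarrow> nat \<Rightarrow> real) \<Rightarrow> real" where
  "elem_sym_minor n k X = (\<Sum>S | S \<subseteq> {0..<n} \<and> card S = k. principal_minor X S)"

definition restrict_minor_sum :: "nat \<Rightarrow> nat \<Rightarrow> nat \<Rightarrow> (nat \<Rightarrow> nat \<Rightarrow> real) \<Rightarrow> real" where
  "restrict_minor_sum n k i X = (\<Sum>S | S \<subseteq> {0..<n} \<and> card S = k \<and> i \<in> S. principal_minor X S)"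

datatype instr = Const real | Add nat nat | Sub nat nat | Mul nat nat | Div nat nat

definition reg :: "real list \<Rightarrow> nat \<Rightarrow> real" where
  "reg rs a = (if a < length rs then rs ! a else 0)"

fun step :: "real list \<Rightarrow> instr \<Rightarrow> real" where
  "step rs (Const c) = c"
| "step rs (Add a b) = reg rs a + reg rs b"
| "step rs (Sub a b) = reg rs a - reg rs b"
| "step rs (Mul a b) = reg rs a * reg rs b"
| "step rs (Div a b) = reg rs a / reg rs b"

fun exec :: "real list \<Rightarrow> instr list \<Rightarrow> real list" where
  "exec rs [] = rs"
| "exec rs (ins # P) = exec (rs @ [step rs ins]) P"

text \<open>Program P with output registers outs computes F on all inputs satisfying D
  (inputs are lists of length m). The cost is the number of instructions, length P.\<close>
definition slp_computes ::
  "nat \<Rightarrow> (real list \<Rightarrow> bool) \<Rightarrow> (real list \<Rightarrow> real list) \<Rightarrow> instr list \<Rightarrow> nat list \<Rightarrow> bool" where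
  "slp_computes m D F P outs \<longleftrightarrow>
     (\<forall>x. length x = m \<longrightarrow> D x \<longrightarrow> map (reg (exec x P)) outs = F x)"

text \<open>Input encoding for the n x n product: A in row-major order, then B; output is AB row-major.\<close>
definition matmul_spec :: "nat \<Rightarrow> real list \<Rightarrow> real list" where
  "matmul_spec n x = map (\<lambda>r. \<Sum>l<n. x ! ((r div n) * n + l) * x ! (n * n + l * n + r mod n)) [0..<n*n]"

definition mm_exponent :: "real \<Rightarrow> bool" where
  "mm_exponent \<tau> \<longleftrightarrow> (\<exists>C. \<forall>n\<ge>1. \<exists>P outs.
      slp_computes (2 * n * n) (\<lambda>_. True) (matmul_spec n) P outs \<and> real (length P) \<le> C * real n powr \<tau>)"

definition omega :: real where
  "omega = Inf {\<tau>. mm_exponent \<tau>}"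

text \<open>Input list: X in row-major order (n^2 entries), then Q in row-major order (n^2 entries),
  then the diagonal of Lambda (n entries).\<close>
definition inX :: "nat \<Rightarrow> real list \<Rightarrow> nat \<Rightarrow> nat \<Rightarrow> real" where
  "inX n x i j = x ! (i * n + j)"
definition inQ :: "nat \<Rightarrow> real list \<Rightarrow> nat \<Rightarrow> nat \<Rightarrow> real" where
  "inQ n x i j = x ! (n * n + i * n + j)"
definition inL :: "nat \<Rightarrow> real list \<Rightarrow> nat \<Rightarrow> real" where
  "inL n x j = x ! (2 * n * n + j)"

text \<open>Valid input: Q orthogonal (Q Q^T = I) and X = Q Lambda Q^T (hence X real symmetric).\<close>
definition valid_input :: "nat \<Rightarrow> real list \<Rightarrow> bool" where
  "valid_input n x \<longleftrightarrow>
     (\<forall>i<n. \<forall>j<n. (\<Sum>l<n. inQ n x i l * inQ n x j l) = (if i = j then 1 else 0)) \<and>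
     (\<forall>i<n. \<forall>j<n. inX n x i j = (\<Sum>l<n. inQ n x i l * inL n x l * inQ n x j l))"

definition minor_vector :: "nat \<Rightarrow> nat \<Rightarrow> real list \<Rightarrow> real list" where
  "minor_vector n k x = map (\<lambda>i. restrict_minor_sum n k i (inX n x)) [0..<n]"

end

theory Submission
  imports Defs "Jordan_Normal_Form.Determinant" "HOL-Computational_Algebra.Polynomial"
begin


lemma permutes_fix_iff:
  assumes "S \<subseteq> A"
  shows "(p permutes A \<and> (\<forall>a\<in>A - S. p a = a)) \<longleftrightarrow> p permutes S"
proof
  assume h: "p permutes A \<and> (\<forall>a\<in>A - S. p a = a)"
  show "p permutes S" unfolding permutes_def
  proof (intro conjI allI impI)
    fix x assume "x \<notin> S" then show "p x = x"
    proof (cases "x \<in> A")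
      case True then show ?thesis using h \<open>x \<notin> S\<close> by simp
    next
      case False then show ?thesis using h permutes_not_in[of p A x] by simp
    qed
  next
    fix y have "p permutes A" using h by (rule conjunct1)
    then have "\<forall>y. \<exists>!x. p x = y" unfolding permutes_def by (rule conjunct2)
    then show "\<exists>!x. p x = y" by (rule spec)
  qed
next
  assume "p permutes S"
  then show "p permutes A \<and> (\<forall>a\<in>A - S. p a = a)"
    using assms permutes_subset[of p S A] permutes_not_in[of p S] by simp
qed

lemma minor_expand:
  assumes fin: "finite A"
  shows "principal_minor (\<lambda>a b. (if a = b then d a else 0) + M a b) A =
         (\<Sum>S\<in>Pow A. prod d (A - S) * principal_minor M S)"
proof -
  have "principal_minor (\<lambda>a b. (if a = b then d a else 0) + M a b) A =
    (\<Sum>p | p permutes A. of_int (sign p) * (\<Sum>S\<in>Pow A. (\<Prod>a\<in>S. M a (p a)) * (\<Prod>a\<in>A - S. (if a = p a then d a else 0))))"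
  proof -
    have "(\<Prod>a\<in>A. (if a = p a then d a else 0) + M a (p a)) = (\<Sum>S\<in>Pow A. (\<Prod>a\<in>S. M a (p a)) * (\<Prod>a\<in>A - S. (if a = p a then d a else 0)))" for p
    proof -
      have "(\<Prod>a\<in>A. (if a = p a then d a else 0) + M a (p a)) = (\<Prod>a\<in>A. M a (p a) + (if a = p a then d a else 0))"
        by (intro prod.cong refl) (rule add.commute)
      also have "\<dots> = (\<Sum>S\<in>Pow A. (\<Prod>a\<in>S. M a (p a)) * (\<Prod>a\<in>A - S. (if a = p a then d a else 0)))"
        by (rule prod_add[OF fin])
      finally show ?thesis .
    qed
    then show ?thesis unfolding principal_minor_def by simp
  qed
  also have "\<dots> = (\<Sum>S\<in>Pow A. \<Sum>p | p permutes A. of_int (sign p) * ((\<Prod>a\<in>S. M a (p a)) * (\<Prod>a\<in>A - S. (if a = p a then d a else 0))))"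
    by (simp only: sum_distrib_left, rule sum.swap)
  also have "\<dots> = (\<Sum>S\<in>Pow A. prod d (A - S) * principal_minor M S)"
  proof (intro sum.cong refl)
    fix S assume S: "S \<in> Pow A"
    have fS: "finite S" using S fin finite_subset by auto
    have eq: "(\<Prod>a\<in>A - S. (if a = p a then d a else 0)) = (if (\<forall>a\<in>A - S. p a = a) then prod d (A - S) else 0)" for p
    proof (cases "\<forall>a\<in>A - S. p a = a")
      case True then show ?thesis by (auto intro: prod.cong)
    next
      case False
      then obtain a where "a \<in> A - S" "p a \<noteq> a" by blast
      then have "(if a = p a then d a else 0) = 0" by auto
      then have "(\<Prod>a\<in>A - S. (if a = p a then d a else 0)) = 0"
        using fin \<open>a \<in> A - S\<close> by (intro prod_zero) blast+
      then show ?thesis using False by auto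
    qed
    have "(\<Sum>p | p permutes A. of_int (sign p) * ((\<Prod>a\<in>S. M a (p a)) * (\<Prod>a\<in>A - S. (if a = p a then d a else 0))))
       = (\<Sum>p \<in> {p. p permutes A}. if (\<forall>a\<in>A - S. p a = a) then prod d (A - S) * (of_int (sign p) * (\<Prod>a\<in>S. M a (p a))) else 0)"
      by (intro sum.cong refl) (simp only: eq, simp)
    also have "\<dots> = (\<Sum>p \<in> {p \<in> {p. p permutes A}. (\<forall>a\<in>A - S. p a = a)}. prod d (A - S) * (of_int (sign p) * (\<Prod>a\<in>S. M a (p a))))"
      by (rule sum.inter_filter[symmetric]) (simp add: finite_permutations fin)
    also have "{p \<in> {p. p permutes A}. (\<forall>a\<in>A - S. p a = a)} = {p. p permutes S}"
      using permutes_fix_iff[of S A] S by auto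
    finally show "(\<Sum>p | p permutes A. of_int (sign p) * ((\<Prod>a\<in>S. M a (p a)) * (\<Prod>a\<in>A - S. (if a = p a then d a else 0))))
        = prod d (A - S) * principal_minor M S"
      unfolding principal_minor_def sum_distrib_left by (simp only: mult.assoc)
  qed
  finally show ?thesis .
qed



lemma sum_sign_zero:
  assumes fin: "finite S" and ab: "a \<in> S" "b \<in> S" "a \<noteq> b"
  shows "(\<Sum>p | p permutes S. (of_int (sign p) :: real)) = 0"
proof -
  let ?t = "Transposition.transpose a b"
  have tp: "?t permutes S" using ab(1,2) by (rule permutes_swap_id)
  have "(\<Sum>p | p permutes S. (of_int (sign p) :: real)) = (\<Sum>p | p permutes S. - (of_int (sign p) :: real))"
  proof (rule sum.reindex_bij_witness[where i = "\<lambda>p. ?t \<circ> p" and j = "\<lambda>p. ?t \<circ> p"])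
    fix p assume "p \<in> {p. p permutes S}"
    then have p: "p permutes S" by simp
    show "?t \<circ> (?t \<circ> p) = p" by (simp add: comp_assoc[symmetric] transpose_comp_involutory)
    show "?t \<circ> p \<in> {p. p permutes S}" using permutes_compose[OF p tp] by simp
    show "- (of_int (sign (?t \<circ> p)) :: real) = of_int (sign p)"
    proof -
      have "permutation p" using p fin permutation_permutes by blast
      moreover have "permutation ?t" using tp fin permutation_permutes by blast
      ultimately have "sign (?t \<circ> p) = sign ?t * sign p" by (simp add: sign_compose)
      then show ?thesis using ab by (simp add: sign_swap_id)
    qed
  next
    fix p assume "p \<in> {p. p permutes S}"
    then have p: "p permutes S" by simp
    show "?t \<circ> (?t \<circ> p) = p" by (simp add: comp_assoc[symmetric] transpose_comp_involutory)
    show "?t \<circ> p \<in> {p. p permutes S}" using permutes_compose[OF p tp] by simp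
  qed
  then show ?thesis by (simp add: sum_negf)
qed

lemma rank_one_minor:
  assumes fin: "finite S" and c: "2 \<le> card S"
  shows "principal_minor (\<lambda>a b. c * u a * u b) S = 0"
proof -
  obtain a where a: "a \<in> S" using c by fastforce
  have "card (S - {a}) \<ge> 1" using c a fin by simp
  then have "S - {a} \<noteq> {}" by (metis card.empty not_one_le_zero)
  then obtain b where b: "b \<in> S - {a}" by blast
  have "principal_minor (\<lambda>a b. c * u a * u b) S =
    (\<Sum>p | p permutes S. of_int (sign p) * ((\<Prod>x\<in>S. c * u x) * prod u S))"
  proof (unfold principal_minor_def, intro sum.cong refl)
    fix p assume "p \<in> {p. p permutes S}"
    then have p: "p permutes S" by simp
    have "(\<Prod>x\<in>S. c * u x * u (p x)) = (\<Prod>x\<in>S. c * u x) * (\<Prod>x\<in>S. u (p x))"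
      by (simp add: prod.distrib)
    also have "(\<Prod>x\<in>S. u (p x)) = prod u S" using prod.permute[OF p, of u] by (simp add: o_def)
    finally show "of_int (sign p) * (\<Prod>x\<in>S. c * u x * u (p x)) = of_int (sign p) * ((\<Prod>x\<in>S. c * u x) * prod u S)" by simp
  qed
  also have "\<dots> = (\<Sum>p | p permutes S. of_int (sign p)) * ((\<Prod>x\<in>S. c * u x) * prod u S)"
    by (simp add: sum_distrib_right)
  also have "\<dots> = 0" using sum_sign_zero[OF fin a, of b] b by simp
  finally show ?thesis .
qed



lemma pm_cong:
  assumes "\<And>a b. a \<in> S \<Longrightarrow> b \<in> S \<Longrightarrow> M a b = M' a b"
  shows "principal_minor M S = principal_minor M' S"
  unfolding principal_minor_def
proof (intro sum.cong refl arg_cong2[where f = "(*)"] prod.cong)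
  fix p x assume "p \<in> {p. p permutes S}" "x \<in> S"
  then show "M x (p x) = M' x (p x)" using assms permutes_in_image by fastforce
qed

lemma pm_det: "principal_minor M {0..<n} = det (mat n n (\<lambda>(a,b). M a b))"
proof -
  have "det (mat n n (\<lambda>(a,b). M a b)) = (\<Sum>p \<in> {p. p permutes {0..<n}}. of_int (sign p) * (\<Prod>i=0..<n. mat n n (\<lambda>(a,b). M a b) $$ (i, p i)))"
    by (rule det_def') simp
  also have "\<dots> = principal_minor M {0..<n}"
    unfolding principal_minor_def
  proof (intro sum.cong refl arg_cong2[where f = "(*)"] prod.cong)
    fix p x assume "p \<in> {p. p permutes {0..<n}}" "x \<in> {0..<n}"
    then have "p x < n" using permutes_in_image by fastforce
    then show "mat n n (\<lambda>(a,b). M a b) $$ (x, p x) = M x (p x)" using \<open>x \<in> {0..<n}\<close> by simp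
  qed
  finally show ?thesis by simp
qed

lemma pm_mult:
  "principal_minor (\<lambda>a b. \<Sum>l<n. A a l * B l b) {0..<n} = principal_minor A {0..<n} * principal_minor B {0..<n}"
proof -
  have "mat n n (\<lambda>(a,b). \<Sum>l<n. A a l * B l b) = mat n n (\<lambda>(a,b). A a b) * mat n n (\<lambda>(a,b). B a b)"
    by (rule eq_matI) (auto simp: scalar_prod_def atLeast0LessThan intro!: sum.cong)
  then show ?thesis unfolding pm_det by (simp add: det_mult[of _ n])
qed

lemma pm_transpose:
  "principal_minor (\<lambda>a b. A b a) {0..<n} = principal_minor A {0..<n}"
proof -
  have "mat n n (\<lambda>(a,b). A b a) = transpose_mat (mat n n (\<lambda>(a,b). A a b))"
    by (rule eq_matI) auto
  then show ?thesis unfolding pm_det by (simp add: det_transpose[of _ n])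
qed

lemma pm_id: "principal_minor (\<lambda>a b. if a = b then 1 else 0) {0..<n} = 1"
proof -
  have "mat n n (\<lambda>(a,b). if a = b then 1 else (0::real)) = 1\<^sub>m n"
    by (rule eq_matI) auto
  then show ?thesis unfolding pm_det by simp
qed

lemma pm_empty: "principal_minor M {} = 1"
  unfolding principal_minor_def by simp

lemma pm_single: "principal_minor M {j} = M j j"
  unfolding principal_minor_def by simp



lemma rank1_expand:
  fixes u d :: "nat \<Rightarrow> real"
  assumes rk: "\<And>S. S \<subseteq> U \<Longrightarrow> 2 \<le> card S \<Longrightarrow> principal_minor M S = 0"
    and fin: "finite U"
  shows "(\<Sum>S\<in>Pow U. prod d (U - S) * principal_minor M S) =
         prod d U + (\<Sum>j\<in>U. prod d (U - {j}) * M j j)"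
proof -
  let ?f = "\<lambda>S. prod d (U - S) * principal_minor M S"
  have "(\<Sum>S\<in>Pow U. ?f S) = (\<Sum>S\<in>{S\<in>Pow U. card S \<le> 1}. ?f S)"
  proof (rule sum.mono_neutral_right)
    show "finite (Pow U)" using fin by simp
    show "{S \<in> Pow U. card S \<le> 1} \<subseteq> Pow U" by auto
    show "\<forall>S\<in>Pow U - {S \<in> Pow U. card S \<le> 1}. ?f S = 0"
    proof
      fix S assume "S \<in> Pow U - {S \<in> Pow U. card S \<le> 1}"
      then have "S \<subseteq> U" "2 \<le> card S" by auto
      then show "?f S = 0" using rk by simp
    qed
  qed
  also have "{S\<in>Pow U. card S \<le> 1} = insert {} ((\<lambda>j. {j}) ` U)"
  proof (intro equalityI subsetI)
    fix S assume S: "S \<in> {S\<in>Pow U. card S \<le> 1}"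
    then have fS: "finite S" using fin finite_subset by auto
    show "S \<in> insert {} ((\<lambda>j. {j}) ` U)"
    proof (cases "card S = 0")
      case True then show ?thesis using fS by simp
    next
      case False then have "card S = 1" using S by auto
      then obtain j where "S = {j}" by (rule card_1_singletonE)
      then show ?thesis using S by auto
    qed
  next
    fix S assume "S \<in> insert {} ((\<lambda>j. {j}) ` U)"
    then show "S \<in> {S\<in>Pow U. card S \<le> 1}" by auto
  qed
  also have "(\<Sum>S\<in>insert {} ((\<lambda>j. {j}) ` U). ?f S) = ?f {} + (\<Sum>S\<in>(\<lambda>j. {j}) ` U. ?f S)"
    using fin by (subst sum.insert) auto
  also have "(\<Sum>S\<in>(\<lambda>j. {j}) ` U. ?f S) = (\<Sum>j\<in>U. ?f {j})"
    by (subst sum.reindex) (auto simp: inj_on_def)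
  finally show ?thesis by (simp add: pm_empty pm_single)
qed

lemma main_math:
  fixes n i k :: nat and Q X :: "nat \<Rightarrow> nat \<Rightarrow> real" and lam :: "nat \<Rightarrow> real"
  assumes hQ: "\<forall>a<n. \<forall>b<n. (\<Sum>l<n. Q a l * Q b l) = (if a = b then 1 else 0)"
    and hX: "\<forall>a<n. \<forall>b<n. X a b = (\<Sum>l<n. Q a l * lam l * Q b l)"
    and i: "i < n" and k: "k \<le> n"
  shows "restrict_minor_sum n k i X =
         (\<Sum>j<n. Q i j * Q i j * lam j * coeff (\<Prod>l\<in>{0..<n}-{j}. [:lam l, 1:]) (n-k))"
proof -
  let ?U = "{0..<n}"
  define u where "u l = Q i l" for l
  have detQ: "principal_minor Q ?U * principal_minor Q ?U = 1"
  proof -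
    have "principal_minor (\<lambda>a b. \<Sum>l<n. Q a l * Q b l) ?U = principal_minor (\<lambda>a b. if a = b then 1 else 0) ?U"
      by (rule pm_cong) (use hQ in auto)
    then show ?thesis using pm_mult[where A=Q and n=n and B="\<lambda>l b. Q b l"] pm_transpose[of Q n] pm_id[of n] by simp
  qed
  define LP where "LP = (\<Sum>S\<in>{S\<in>Pow ?U. i \<in> S}. monom (principal_minor X S) (n - card S))"
  define RP where "RP = (\<Sum>j<n. smult (u j * u j * lam j) (\<Prod>l\<in>?U-{j}. [:lam l, 1:]))"
  have "poly LP t = poly RP t" for t
  proof -
    define Dt where "Dt a = (if a = i then 0 else t)" for a
    define d where "d l = t + lam l" for l
    define M where "M l m = (-t) * u l * u m" for l m
    define B where "B l m = (if l = m then d l else 0) + M l m" for l m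
    let ?L = "principal_minor (\<lambda>a b. (if a = b then Dt a else 0) + X a b) ?U"
    have E1: "?L = poly LP t"
    proof -
      have "?L = (\<Sum>S\<in>Pow ?U. prod Dt (?U - S) * principal_minor X S)"
        by (rule minor_expand) simp
      also have "\<dots> = (\<Sum>S\<in>{S\<in>Pow ?U. i \<in> S}. prod Dt (?U - S) * principal_minor X S)"
      proof (rule sum.mono_neutral_right)
        show "\<forall>S\<in>Pow ?U - {S\<in>Pow ?U. i \<in> S}. prod Dt (?U - S) * principal_minor X S = 0"
        proof
          fix S assume "S \<in> Pow ?U - {S\<in>Pow ?U. i \<in> S}"
          then have "i \<in> ?U - S" using i by auto
          then have "prod Dt (?U - S) = 0" by (intro prod_zero) (auto simp: Dt_def intro!: bexI[of _ i])
          then show "prod Dt (?U - S) * principal_minor X S = 0" by simp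
        qed
      qed auto
      also have "\<dots> = poly LP t"
        unfolding LP_def poly_sum poly_monom
      proof (intro sum.cong refl)
        fix S assume S: "S \<in> {S\<in>Pow ?U. i \<in> S}"
        have "prod Dt (?U - S) = (\<Prod>x\<in>?U - S. t)" by (intro prod.cong refl) (use S in \<open>auto simp: Dt_def\<close>)
        also have "\<dots> = t ^ card (?U - S)" by simp
        also have "card (?U - S) = n - card S" using S by (subst card_Diff_subset) (auto intro: finite_subset)
        finally show "prod Dt (?U - S) * principal_minor X S = principal_minor X S * t ^ (n - card S)" by simp
      qed
      finally show ?thesis .
    qed
    have E2: "?L = principal_minor B ?U"
    proof -
      have ent: "(if a = b then Dt a else 0) + X a b = (\<Sum>l<n. Q a l * (\<Sum>m<n. B l m * Q b m))"
        if ab: "a < n" "b < n" for a b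
      proof -
        have ub: "(\<Sum>m<n. u m * Q b m) = (if i = b then 1 else 0)" using hQ i ab unfolding u_def by auto
        have "(\<Sum>m<n. B l m * Q b m) = d l * Q b l + (-t) * u l * (if i = b then 1 else 0)" if "l < n" for l
        proof -
          have "(\<Sum>m<n. B l m * Q b m) = (\<Sum>m<n. (if l = m then d l * Q b m else 0) + (-t) * u l * (u m * Q b m))"
            unfolding B_def M_def by (intro sum.cong refl) (auto simp: algebra_simps)
          also have "\<dots> = (\<Sum>m<n. (if l = m then d l * Q b m else 0)) + (\<Sum>m<n. (-t) * u l * (u m * Q b m))"
            by (rule sum.distrib)
          also have "(\<Sum>m<n. (if l = m then d l * Q b m else 0)) = d l * Q b l"
            using that by (simp add: sum.delta)
          also have "(\<Sum>m<n. (-t) * u l * (u m * Q b m)) = (-t) * u l * (\<Sum>m<n. u m * Q b m)"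
            by (rule sum_distrib_left[symmetric])
          finally show ?thesis using ub by simp
        qed
        then have "(\<Sum>l<n. Q a l * (\<Sum>m<n. B l m * Q b m)) = (\<Sum>l<n. Q a l * (d l * Q b l + (-t) * u l * (if i = b then 1 else 0)))"
          by (intro sum.cong) auto
        also have "\<dots> = t * (\<Sum>l<n. Q a l * Q b l) + (\<Sum>l<n. Q a l * lam l * Q b l) - t * (if i = b then 1 else 0) * (\<Sum>l<n. Q a l * Q i l)"
          unfolding d_def u_def by (simp add: sum.distrib sum_distrib_left sum_subtractf algebra_simps)
        also have "\<dots> = (if a = b then Dt a else 0) + X a b"
          using hQ hX ab i unfolding Dt_def by auto
        finally show ?thesis by simp
      qed
      have "?L = principal_minor (\<lambda>a b. \<Sum>l<n. Q a l * (\<Sum>m<n. B l m * Q b m)) ?U"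
        by (rule pm_cong) (use ent in auto)
      also have "\<dots> = principal_minor Q ?U * (principal_minor B ?U * principal_minor Q ?U)"
        using pm_mult[where A=Q and n=n and B="\<lambda>l b. \<Sum>m<n. B l m * Q b m"] pm_mult[where A=B and n=n and B="\<lambda>m b. Q b m"] pm_transpose[of Q n]
        by simp
      also have "\<dots> = principal_minor B ?U" using detQ by (simp add: algebra_simps)
      finally show ?thesis .
    qed
    have E3: "principal_minor B ?U = prod d ?U + (\<Sum>j<n. prod d (?U - {j}) * ((-t) * u j * u j))"
    proof -
      have "principal_minor B ?U = (\<Sum>S\<in>Pow ?U. prod d (?U - S) * principal_minor M S)"
        unfolding B_def by (rule minor_expand) simp
      also have "\<dots> = prod d ?U + (\<Sum>j\<in>?U. prod d (?U - {j}) * M j j)"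
      proof (rule rank1_expand)
        have Mfun: "M = (\<lambda>l m. (-t) * u l * u m)" by (simp add: fun_eq_iff M_def)
        show "principal_minor M S = 0" if "S \<subseteq> ?U" "2 \<le> card S" for S
          unfolding Mfun by (rule rank_one_minor) (use that finite_subset in auto)
      qed simp
      finally show ?thesis by (simp add: M_def atLeast0LessThan)
    qed
    have E4: "prod d ?U + (\<Sum>j<n. prod d (?U - {j}) * ((-t) * u j * u j)) = poly RP t"
    proof -
      have su: "(\<Sum>j<n. u j * u j) = 1" using hQ i unfolding u_def by auto
      have "prod d ?U = (\<Sum>j<n. u j * u j * ((t + lam j) * prod d (?U - {j})))"
      proof -
        have "prod d ?U = (\<Sum>j<n. u j * u j) * prod d ?U" using su by simp
        also have "\<dots> = (\<Sum>j<n. u j * u j * prod d ?U)" by (simp add: sum_distrib_right)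
        also have "\<dots> = (\<Sum>j<n. u j * u j * ((t + lam j) * prod d (?U - {j})))"
          by (intro sum.cong refl) (simp add: prod.remove[of ?U] d_def)
        finally show ?thesis .
      qed
      then have "prod d ?U + (\<Sum>j<n. prod d (?U - {j}) * ((-t) * u j * u j)) =
         (\<Sum>j<n. u j * u j * lam j * prod d (?U - {j}))"
        by (simp add: sum.distrib[symmetric] algebra_simps)
      also have "\<dots> = poly RP t"
        unfolding RP_def poly_sum poly_smult poly_prod d_def by (simp add: algebra_simps)
      finally show ?thesis .
    qed
    show ?thesis using E1 E2 E3 E4 by simp
  qed
  then have "LP = RP" using poly_eq_poly_eq_iff by blast
  then have "coeff LP (n-k) = coeff RP (n-k)" by simp
  moreover have "coeff LP (n-k) = restrict_minor_sum n k i X"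
  proof -
    have "coeff LP (n-k) = (\<Sum>S\<in>{S\<in>Pow ?U. i \<in> S}. if card S = k then principal_minor X S else 0)"
      unfolding LP_def coeff_sum coeff_monom
    proof (intro sum.cong refl)
      fix S assume "S \<in> {S\<in>Pow ?U. i \<in> S}"
      then have "card S \<le> n" using card_mono[of ?U S] by auto
      then show "(if n - card S = n - k then principal_minor X S else 0) = (if card S = k then principal_minor X S else 0)"
        using k by auto
    qed
    also have "\<dots> = (\<Sum>S\<in>{S\<in>{S\<in>Pow ?U. i \<in> S}. card S = k}. principal_minor X S)"
      by (rule sum.inter_filter[symmetric]) simp
    also have "{S\<in>{S\<in>Pow ?U. i \<in> S}. card S = k} = {S. S \<subseteq> ?U \<and> card S = k \<and> i \<in> S}" by auto
    finally show ?thesis unfolding restrict_minor_sum_def by simp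
  qed
  moreover have "coeff RP (n-k) = (\<Sum>j<n. Q i j * Q i j * lam j * coeff (\<Prod>l\<in>{0..<n}-{j}. [:lam l, 1:]) (n-k))"
    unfolding RP_def coeff_sum coeff_smult u_def by simp
  ultimately show ?thesis by simp
qed


lemma length_exec: "length (exec rs P) = length rs + length P"
  by (induction P arbitrary: rs) auto

lemma exec_prefix: "a < length rs \<Longrightarrow> exec rs P ! a = rs ! a"
  by (induction P arbitrary: rs) (auto simp: nth_append)

fun sem :: "(nat \<Rightarrow> real) \<Rightarrow> instr \<Rightarrow> real" where
  "sem R (Const c) = c"
| "sem R (Add a b) = R a + R b"
| "sem R (Sub a b) = R a - R b"
| "sem R (Mul a b) = R a * R b"
| "sem R (Div a b) = R a / R b"

fun refs_lt :: "instr \<Rightarrow> nat \<Rightarrow> bool" where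
  "refs_lt (Const c) N = True"
| "refs_lt (Add a b) N = (a < N \<and> b < N)"
| "refs_lt (Sub a b) N = (a < N \<and> b < N)"
| "refs_lt (Mul a b) N = (a < N \<and> b < N)"
| "refs_lt (Div a b) N = (a < N \<and> b < N)"

lemma reg_map: "a < N \<Longrightarrow> reg (map R [0..<N]) a = R a"
  by (simp add: reg_def)

lemma step_sem: "refs_lt ins N \<Longrightarrow> step (map R [0..<N]) ins = sem R ins"
  by (cases ins) (auto simp: reg_map)

lemma exec_R:
  "(\<And>t. t < length P \<Longrightarrow> refs_lt (P!t) (N+t) \<and> sem R (P!t) = R (N+t)) \<Longrightarrow>
   exec (map R [0..<N]) P = map R [0..<N + length P]"
proof (induction P arbitrary: N)
  case Nil then show ?case by simp
next
  case (Cons ins P)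
  have h0: "refs_lt ins N \<and> sem R ins = R N" using Cons.prems[of 0] by simp
  have "exec (map R [0..<N]) (ins # P) = exec (map R [0..<Suc N]) P"
    using h0 step_sem[of ins N R] by simp
  also have "\<dots> = map R [0..<Suc N + length P]"
  proof (rule Cons.IH)
    fix t assume "t < length P"
    then show "refs_lt (P!t) (Suc N+t) \<and> sem R (P!t) = R (Suc N+t)"
      using Cons.prems[of "Suc t"] by simp
  qed
  finally show ?case by simp
qed

lemma lin_bound: "l < n \<Longrightarrow> m < (N::nat) \<Longrightarrow> l * N + m < n * N"
proof -
  assume "l < n" "m < N"
  then have "l * N + m < l * N + N" by simp
  also have "\<dots> = Suc l * N" by simp
  also have "\<dots> \<le> n * N" using \<open>l < n\<close> by (intro mult_right_mono) auto
  finally show ?thesis .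
qed

lemma dm_div: "m < (N::nat) \<Longrightarrow> (l * N + m) div N = l"
  by simp
lemma dm_mod: "m < (N::nat) \<Longrightarrow> (l * N + m) mod N = m"
  by simp

lemma decomp:
  assumes "q < n * (N::nat)" "0 < N"
  obtains l m where "q = l * N + m" "l < n" "m < N"
proof
  show "q = q div N * N + q mod N" by simp
  show "q div N < n" using assms by (simp add: less_mult_imp_div_less)
  show "q mod N < N" using assms by simp
qed


definition N0 :: "nat \<Rightarrow> nat" where "N0 n = 2*n*n + n"
definition A0 :: "nat \<Rightarrow> nat" where "A0 n = N0 n + 2"
definition B0 :: "nat \<Rightarrow> nat" where "B0 n = A0 n + 2*(n*(n+1))"
definition W0 :: "nat \<Rightarrow> nat \<Rightarrow> nat" where "W0 n k = B0 n + 2*(n*k)"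
definition C0 :: "nat \<Rightarrow> nat \<Rightarrow> nat" where "C0 n k = W0 n k + n"
definition LE :: "nat \<Rightarrow> nat \<Rightarrow> nat" where "LE n k = C0 n k + 3*(n*n)"

definition lamreg :: "nat \<Rightarrow> nat \<Rightarrow> nat" where "lamreg n l = 2*n*n + l"
definition Qreg :: "nat \<Rightarrow> nat \<Rightarrow> nat \<Rightarrow> nat" where "Qreg n i j = n*n + i*n + j"
definition Dreg :: "nat \<Rightarrow> nat \<Rightarrow> nat \<Rightarrow> nat" where "Dreg n l m = (if l = 0 then (if m = 0 then N0 n + 1 else N0 n) else A0 n + 2*((l-1)*(n+1)+m) + 1)"
definition Dreg1 :: "nat \<Rightarrow> nat \<Rightarrow> nat \<Rightarrow> nat" where "Dreg1 n l m = (if m = 0 then N0 n else Dreg n l (m-1))"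
definition Greg :: "nat \<Rightarrow> nat \<Rightarrow> nat \<Rightarrow> nat \<Rightarrow> nat" where "Greg n k j s = (if s = 0 then N0 n else B0 n + 2*(j*k+(s-1)) + 1)"
definition Acc :: "nat \<Rightarrow> nat \<Rightarrow> nat \<Rightarrow> nat \<Rightarrow> nat" where "Acc n k i j = (if j = 0 then N0 n else C0 n k + 3*(i*n+(j-1)) + 2)"

definition insAt :: "nat \<Rightarrow> nat \<Rightarrow> nat \<Rightarrow> instr" where
 "insAt n k p =
  (if p = N0 n then Const 0 else if p = N0 n + 1 then Const 1
   else if p < B0 n then (let q = p - A0 n; c = q div 2; l = c div (n+1); m = c mod (n+1) in
     if q mod 2 = 0 then Mul (lamreg n l) (Dreg n l m) else Add (p-1) (Dreg1 n l m))
   else if p < W0 n k then (let q = p - B0 n; c = q div 2; j = c div k; s = c mod k in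
     if q mod 2 = 0 then Mul (lamreg n j) (Greg n k j s) else Sub (Dreg n n (n - s)) (p-1))
   else if p < C0 n k then Mul (lamreg n (p - W0 n k)) (Greg n k (p - W0 n k) k)
   else (let q = p - C0 n k; c = q div 3; i = c div n; j = c mod n in
     if q mod 3 = 0 then Mul (Qreg n i j) (Qreg n i j)
     else if q mod 3 = 1 then Mul (p-1) (W0 n k + j) else Add (Acc n k i j) (p-1)))"

definition lamv :: "nat \<Rightarrow> real list \<Rightarrow> nat \<Rightarrow> real" where "lamv n x l = x ! (2*n*n + l)"
definition Qv :: "nat \<Rightarrow> real list \<Rightarrow> nat \<Rightarrow> nat \<Rightarrow> real" where "Qv n x i j = x ! (n*n + i*n + j)"
definition Dval :: "nat \<Rightarrow> real list \<Rightarrow> nat \<Rightarrow> nat \<Rightarrow> real" where "Dval n x l m = coeff (\<Prod>a<l. [:lamv n x a, 1:]) m"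
definition Gval :: "nat \<Rightarrow> real list \<Rightarrow> nat \<Rightarrow> nat \<Rightarrow> real" where "Gval n x j s = coeff (\<Prod>a\<in>{0..<n}-{j}. [:lamv n x a, 1:]) (n - s)"
definition Wv :: "nat \<Rightarrow> nat \<Rightarrow> real list \<Rightarrow> nat \<Rightarrow> real" where "Wv n k x j = lamv n x j * Gval n x j k"
definition Cv :: "nat \<Rightarrow> nat \<Rightarrow> real list \<Rightarrow> nat \<Rightarrow> nat \<Rightarrow> real" where "Cv n k x i j = (\<Sum>j'<Suc j. Qv n x i j' * Qv n x i j' * Wv n k x j')"

definition Rv :: "nat \<Rightarrow> nat \<Rightarrow> real list \<Rightarrow> nat \<Rightarrow> real" where
 "Rv n k x p =
  (if p < N0 n then x ! p else if p = N0 n then 0 else if p = N0 n + 1 then 1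
   else if p < B0 n then (let q = p - A0 n; c = q div 2; l = c div (n+1); m = c mod (n+1) in
     if q mod 2 = 0 then lamv n x l * Dval n x l m else Dval n x (Suc l) m)
   else if p < W0 n k then (let q = p - B0 n; c = q div 2; j = c div k; s = c mod k in
     if q mod 2 = 0 then lamv n x j * Gval n x j s else Gval n x j (Suc s))
   else if p < C0 n k then Wv n k x (p - W0 n k)
   else (let q = p - C0 n k; c = q div 3; i = c div n; j = c mod n in
     if q mod 3 = 0 then Qv n x i j * Qv n x i j
     else if q mod 3 = 1 then Qv n x i j * Qv n x i j * Wv n k x j else Cv n k x i j))"

lemma posA:
  assumes "l < n" "m \<le> n" "b < (2::nat)"
  shows "A0 n + 2*(l*(n+1)+m) + b < B0 n" "N0 n + 1 < A0 n + 2*(l*(n+1)+m) + b"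
    "(A0 n + 2*(l*(n+1)+m) + b - A0 n) div 2 div (n+1) = l"
    "(A0 n + 2*(l*(n+1)+m) + b - A0 n) div 2 mod (n+1) = m"
    "(A0 n + 2*(l*(n+1)+m) + b - A0 n) mod 2 = b"
proof -
  have c: "l*(n+1)+m < n*(n+1)" using assms by (intro lin_bound) auto
  show "A0 n + 2*(l*(n+1)+m) + b < B0 n" using c assms unfolding B0_def by simp
  show "N0 n + 1 < A0 n + 2*(l*(n+1)+m) + b" unfolding A0_def by simp
  have e: "(A0 n + 2*(l*(n+1)+m) + b - A0 n) = (l*(n+1)+m) * 2 + b" by simp
  show "(A0 n + 2*(l*(n+1)+m) + b - A0 n) div 2 div (n+1) = l"
    unfolding e using assms by (simp only: dm_div[OF assms(3)] dm_div[of m "n+1" l])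
  show "(A0 n + 2*(l*(n+1)+m) + b - A0 n) div 2 mod (n+1) = m"
    unfolding e using assms by (simp only: dm_div[OF assms(3)] dm_mod[of m "n+1" l])
  show "(A0 n + 2*(l*(n+1)+m) + b - A0 n) mod 2 = b"
    unfolding e by (rule dm_mod[OF assms(3)])
qed


lemma posB:
  assumes "j < n" "s < k" "b < (2::nat)"
  shows "B0 n + 2*(j*k+s) + b < W0 n k" "B0 n \<le> B0 n + 2*(j*k+s) + b"
    "(B0 n + 2*(j*k+s) + b - B0 n) div 2 div k = j"
    "(B0 n + 2*(j*k+s) + b - B0 n) div 2 mod k = s"
    "(B0 n + 2*(j*k+s) + b - B0 n) mod 2 = b"
proof -
  have c: "j*k+s < n*k" using assms by (intro lin_bound) auto
  show "B0 n + 2*(j*k+s) + b < W0 n k" using c assms unfolding W0_def by simp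
  show "B0 n \<le> B0 n + 2*(j*k+s) + b" by simp
  have e: "(B0 n + 2*(j*k+s) + b - B0 n) = (j*k+s) * 2 + b" by simp
  show "(B0 n + 2*(j*k+s) + b - B0 n) div 2 div k = j"
    unfolding e by (simp only: dm_div[OF assms(3)] dm_div[OF assms(2)])
  show "(B0 n + 2*(j*k+s) + b - B0 n) div 2 mod k = s"
    unfolding e by (simp only: dm_div[OF assms(3)] dm_mod[OF assms(2)])
  show "(B0 n + 2*(j*k+s) + b - B0 n) mod 2 = b"
    unfolding e by (rule dm_mod[OF assms(3)])
qed

lemma posC:
  assumes "i < n" "j < n" "b < (3::nat)"
  shows "C0 n k + 3*(i*n+j) + b < LE n k" "C0 n k \<le> C0 n k + 3*(i*n+j) + b"
    "(C0 n k + 3*(i*n+j) + b - C0 n k) div 3 div n = i"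
    "(C0 n k + 3*(i*n+j) + b - C0 n k) div 3 mod n = j"
    "(C0 n k + 3*(i*n+j) + b - C0 n k) mod 3 = b"
proof -
  have c: "i*n+j < n*n" using assms by (intro lin_bound) auto
  show "C0 n k + 3*(i*n+j) + b < LE n k" using c assms unfolding LE_def by simp
  show "C0 n k \<le> C0 n k + 3*(i*n+j) + b" by simp
  have e: "(C0 n k + 3*(i*n+j) + b - C0 n k) = (i*n+j) * 3 + b" by simp
  show "(C0 n k + 3*(i*n+j) + b - C0 n k) div 3 div n = i"
    unfolding e by (simp only: dm_div[OF assms(3)] dm_div[OF assms(2)])
  show "(C0 n k + 3*(i*n+j) + b - C0 n k) div 3 mod n = j"
    unfolding e by (simp only: dm_div[OF assms(3)] dm_mod[OF assms(2)])
  show "(C0 n k + 3*(i*n+j) + b - C0 n k) mod 3 = b"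
    unfolding e by (rule dm_mod[OF assms(3)])
qed

lemma order_facts: "N0 n + 1 < A0 n" "A0 n \<le> B0 n" "B0 n \<le> W0 n k" "W0 n k \<le> C0 n k" "C0 n k \<le> LE n k"
  unfolding A0_def B0_def W0_def C0_def LE_def by auto

lemma RA:
  assumes "l < n" "m \<le> n" "b < (2::nat)"
  shows "Rv n k x (A0 n + 2*(l*(n+1)+m) + b) = (if b = 0 then lamv n x l * Dval n x l m else Dval n x (Suc l) m)"
    "insAt n k (A0 n + 2*(l*(n+1)+m) + b) = (if b = 0 then Mul (lamreg n l) (Dreg n l m) else Add (A0 n + 2*(l*(n+1)+m) + b - 1) (Dreg1 n l m))"
proof -
  note p = posA[OF assms]
  have ne: "\<not> A0 n + 2*(l*(n+1)+m) + b < N0 n" "A0 n + 2*(l*(n+1)+m) + b \<noteq> N0 n" "A0 n + 2*(l*(n+1)+m) + b \<noteq> N0 n + 1"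
    using p(2) by auto
  show "Rv n k x (A0 n + 2*(l*(n+1)+m) + b) = (if b = 0 then lamv n x l * Dval n x l m else Dval n x (Suc l) m)"
    unfolding Rv_def Let_def using ne p(1) by (simp only: p(3-5) if_False if_True)
  show "insAt n k (A0 n + 2*(l*(n+1)+m) + b) = (if b = 0 then Mul (lamreg n l) (Dreg n l m) else Add (A0 n + 2*(l*(n+1)+m) + b - 1) (Dreg1 n l m))"
    unfolding insAt_def Let_def using ne p(1) by (simp only: p(3-5) if_False if_True)
qed


lemma lin_coeff: "coeff ([:a, 1:] * p) m = a * coeff p m + (if m = 0 then 0 else coeff p (m - 1))" for a :: real
  by (simp add: mult_pCons_left coeff_pCons')
lemma Dval0: "Dval n x 0 m = (if m = 0 then 1 else 0)"
  unfolding Dval_def by simp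

lemma Dstep: "Dval n x (Suc l) m = lamv n x l * Dval n x l m + (if m = 0 then 0 else Dval n x l (m - 1))"
proof -
  have "(\<Prod>a<Suc l. [:lamv n x a, 1:]) = [:lamv n x l, 1:] * (\<Prod>a<l. [:lamv n x a, 1:])"
    by (subst prod.lessThan_Suc) (rule mult.commute)
  then show ?thesis unfolding Dval_def by (simp only: lin_coeff)
qed

lemma G0: "j < n \<Longrightarrow> Gval n x j 0 = 0"
proof -
  assume j: "j < n"
  let ?G = "\<Prod>a\<in>{0..<n}-{j}. [:lamv n x a, 1:]"
  have "degree ?G \<le> (\<Sum>a\<in>{0..<n}-{j}. degree [:lamv n x a, 1:])"
    using degree_prod_sum_le[of "{0..<n}-{j}" "\<lambda>a. [:lamv n x a, 1:]"] by (simp add: o_def)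
  also have "\<dots> = n - 1" using j by simp
  finally have "degree ?G < n" using j by linarith
  then show ?thesis unfolding Gval_def by (simp add: coeff_eq_0)
qed

lemma Gstep:
  assumes "j < n" "s < n"
  shows "Gval n x j (Suc s) = Dval n x n (n - s) - lamv n x j * Gval n x j s"
proof -
  let ?G = "\<Prod>a\<in>{0..<n}-{j}. [:lamv n x a, 1:]"
  have "(\<Prod>a<n. [:lamv n x a, 1:]) = [:lamv n x j, 1:] * ?G"
    unfolding lessThan_atLeast0 by (rule prod.remove) (use assms in auto)
  then have "Dval n x n (n - s) = lamv n x j * coeff ?G (n - s) + (if n - s = 0 then 0 else coeff ?G (n - s - 1))"
    unfolding Dval_def by (simp only: lin_coeff)
  moreover have ns: "n - s \<noteq> 0" using assms by simp
  ultimately have e: "Dval n x n (n - s) = lamv n x j * coeff ?G (n - s) + coeff ?G (n - s - 1)"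
    by (simp only: if_not_P[OF ns] if_False)
  have "n - Suc s = n - s - 1" by simp
  then have "Gval n x j (Suc s) = coeff ?G (n - s - 1)" unfolding Gval_def by (simp only:)
  moreover have "Gval n x j s = coeff ?G (n - s)" unfolding Gval_def by (rule refl)
  ultimately show ?thesis using e by simp
qed

lemma RB:
  assumes "j < n" "s < k" "b < (2::nat)"
  shows "Rv n k x (B0 n + 2*(j*k+s) + b) = (if b = 0 then lamv n x j * Gval n x j s else Gval n x j (Suc s))"
    "insAt n k (B0 n + 2*(j*k+s) + b) = (if b = 0 then Mul (lamreg n j) (Greg n k j s) else Sub (Dreg n n (n - s)) (B0 n + 2*(j*k+s) + b - 1))"
proof -
  note p = posB[OF assms]
  have o: "N0 n + 1 < B0 n" using order_facts[of n] by simp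
  have ne: "\<not> B0 n + 2*(j*k+s) + b < N0 n" "B0 n + 2*(j*k+s) + b \<noteq> N0 n" "B0 n + 2*(j*k+s) + b \<noteq> N0 n + 1"
     "\<not> B0 n + 2*(j*k+s) + b < B0 n"
    using o by auto
  show "Rv n k x (B0 n + 2*(j*k+s) + b) = (if b = 0 then lamv n x j * Gval n x j s else Gval n x j (Suc s))"
    unfolding Rv_def Let_def using ne p(1) by (simp only: p(3-5) if_False if_True)
  show "insAt n k (B0 n + 2*(j*k+s) + b) = (if b = 0 then Mul (lamreg n j) (Greg n k j s) else Sub (Dreg n n (n - s)) (B0 n + 2*(j*k+s) + b - 1))"
    unfolding insAt_def Let_def using ne p(1) by (simp only: p(3-5) if_False if_True)
qed

lemma RW:
  assumes "j < n"
  shows "Rv n k x (W0 n k + j) = Wv n k x j"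
    "insAt n k (W0 n k + j) = Mul (lamreg n j) (Greg n k j k)"
proof -
  have o: "N0 n + 1 < W0 n k" "B0 n \<le> W0 n k" "W0 n k + j < C0 n k" using order_facts(1,2)[of n] order_facts(3-5)[of n k] assms
    unfolding C0_def by auto
  have ne: "\<not> W0 n k + j < N0 n" "W0 n k + j \<noteq> N0 n" "W0 n k + j \<noteq> N0 n + 1"
     "\<not> W0 n k + j < B0 n" "\<not> W0 n k + j < W0 n k"
    using o by auto
  show "Rv n k x (W0 n k + j) = Wv n k x j"
    unfolding Rv_def Let_def using ne o(3) by (simp only: if_False if_True add_diff_cancel_left')
  show "insAt n k (W0 n k + j) = Mul (lamreg n j) (Greg n k j k)"
    unfolding insAt_def Let_def using ne o(3) by (simp only: if_False if_True add_diff_cancel_left')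
qed

lemma RC:
  assumes "i < n" "j < n" "b < (3::nat)"
  shows "Rv n k x (C0 n k + 3*(i*n+j) + b) = (if b = 0 then Qv n x i j * Qv n x i j else if b = 1 then Qv n x i j * Qv n x i j * Wv n k x j else Cv n k x i j)"
    "insAt n k (C0 n k + 3*(i*n+j) + b) = (if b = 0 then Mul (Qreg n i j) (Qreg n i j) else if b = 1 then Mul (C0 n k + 3*(i*n+j) + b - 1) (W0 n k + j) else Add (Acc n k i j) (C0 n k + 3*(i*n+j) + b - 1))"
proof -
  note p = posC[OF assms]
  have o: "N0 n + 1 < C0 n k" "B0 n \<le> C0 n k" "W0 n k \<le> C0 n k" using order_facts(1,2)[of n] order_facts(3-5)[of n k] by auto
  have ne: "\<not> C0 n k + 3*(i*n+j) + b < N0 n" "C0 n k + 3*(i*n+j) + b \<noteq> N0 n" "C0 n k + 3*(i*n+j) + b \<noteq> N0 n + 1"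
     "\<not> C0 n k + 3*(i*n+j) + b < B0 n" "\<not> C0 n k + 3*(i*n+j) + b < W0 n k" "\<not> C0 n k + 3*(i*n+j) + b < C0 n k"
    using o by auto
  show "Rv n k x (C0 n k + 3*(i*n+j) + b) = (if b = 0 then Qv n x i j * Qv n x i j else if b = 1 then Qv n x i j * Qv n x i j * Wv n k x j else Cv n k x i j)"
    unfolding Rv_def Let_def using ne by (simp only: p(3-5) if_False if_True)
  show "insAt n k (C0 n k + 3*(i*n+j) + b) = (if b = 0 then Mul (Qreg n i j) (Qreg n i j) else if b = 1 then Mul (C0 n k + 3*(i*n+j) + b - 1) (W0 n k + j) else Add (Acc n k i j) (C0 n k + 3*(i*n+j) + b - 1))"
    unfolding insAt_def Let_def using ne by (simp only: p(3-5) if_False if_True)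
qed

lemma Rsmall: "p < N0 n \<Longrightarrow> Rv n k x p = x ! p"
  unfolding Rv_def by (rule if_P)

lemma R_N0: "Rv n k x (N0 n) = 0"
proof -
  have "\<not> N0 n < N0 n" by simp
  then show ?thesis unfolding Rv_def by (simp only: if_False if_True eqTrueI[OF refl])
qed

lemma R_N1: "Rv n k x (N0 n + 1) = 1"
proof -
  have "\<not> N0 n + 1 < N0 n" "N0 n + 1 \<noteq> N0 n" by simp_all
  then show ?thesis unfolding Rv_def by (simp only: if_False if_True eqTrueI[OF refl])
qed

lemma lamreg_bound: "l < n \<Longrightarrow> lamreg n l < N0 n"
  unfolding lamreg_def N0_def by simp

lemma R_lamreg: "l < n \<Longrightarrow> Rv n k x (lamreg n l) = lamv n x l"
proof -
  assume "l < n"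
  then have "Rv n k x (lamreg n l) = x ! (lamreg n l)" by (intro Rsmall lamreg_bound)
  then show ?thesis by (simp only: lamreg_def lamv_def)
qed

lemma Qreg_bound: "i < n \<Longrightarrow> j < n \<Longrightarrow> Qreg n i j < N0 n"
proof -
  assume "i < n" "j < n"
  then have "i * n + j < n * n" by (intro lin_bound)
  then have "n*n + i*n + j < n*n + n*n" by linarith
  moreover have "n*n + n*n \<le> 2*n*n + n" by simp
  ultimately show ?thesis unfolding Qreg_def N0_def by linarith
qed

lemma R_Qreg: "i < n \<Longrightarrow> j < n \<Longrightarrow> Rv n k x (Qreg n i j) = Qv n x i j"
proof -
  assume "i < n" "j < n"
  then have "Rv n k x (Qreg n i j) = x ! (Qreg n i j)" by (intro Rsmall Qreg_bound)
  then show ?thesis by (simp only: Qreg_def Qv_def)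
qed

lemma RD: "l \<le> n \<Longrightarrow> m \<le> n \<Longrightarrow> Rv n k x (Dreg n l m) = Dval n x l m"
proof (cases l)
  case 0
  assume "m \<le> n"
  have o: "N0 n + 1 < B0 n" using order_facts[of n] by simp
  show ?thesis using 0 R_N1 by (auto simp: Dreg_def R_N0 Dval0)
next
  case (Suc l')
  assume "l \<le> n" "m \<le> n"
  then have "Dreg n l m = A0 n + 2*(l'*(n+1)+m) + 1" using Suc by (simp add: Dreg_def)
  then show ?thesis using RA(1)[where l=l' and n=n and m=m and b=1 and k=k and x=x] Suc \<open>l \<le> n\<close> \<open>m \<le> n\<close> by simp
qed

lemma RD1: "l \<le> n \<Longrightarrow> m \<le> n \<Longrightarrow> Rv n k x (Dreg1 n l m) = (if m = 0 then 0 else Dval n x l (m - 1))"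
  unfolding Dreg1_def using RD[where l=l and n=n and m="m - 1" and k=k and x=x] by (auto simp: R_N0)

lemma RG: "j < n \<Longrightarrow> s \<le> k \<Longrightarrow> Rv n k x (Greg n k j s) = Gval n x j s"
proof (cases s)
  case 0
  assume "j < n" then show ?thesis using 0 G0 by (simp add: Greg_def R_N0)
next
  case (Suc s')
  assume "j < n" "s \<le> k"
  then have "Greg n k j s = B0 n + 2*(j*k+s') + 1" using Suc by (simp add: Greg_def)
  then show ?thesis using RB(1)[where j=j and n=n and s=s' and k=k and b=1 and x=x] Suc \<open>j < n\<close> \<open>s \<le> k\<close> by simp
qed

lemma RAcc: "i < n \<Longrightarrow> j < n \<Longrightarrow> Rv n k x (Acc n k i j) = (if j = 0 then 0 else Cv n k x i (j - 1))"
proof (cases j)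
  case 0 then show ?thesis by (simp add: Acc_def R_N0)
next
  case (Suc j')
  assume "i < n" "j < n"
  then have "Acc n k i j = C0 n k + 3*(i*n+j') + 2" using Suc by (simp add: Acc_def)
  then show ?thesis using RC(1)[where i=i and n=n and j=j' and b=2 and k=k and x=x] Suc \<open>i < n\<close> \<open>j < n\<close> by simp
qed


lemma I_N0: "insAt n k (N0 n) = Const 0"
  unfolding insAt_def by (rule if_P) (rule refl)

lemma I_N1: "insAt n k (N0 n + 1) = Const 1"
proof -
  have "N0 n + 1 \<noteq> N0 n" by simp
  then show ?thesis unfolding insAt_def by (simp only: if_False if_True eqTrueI[OF refl])
qed

lemma verA:
  assumes "l < n" "m \<le> n" "b < (2::nat)" "p = A0 n + 2*(l*(n+1)+m) + b"
  shows "refs_lt (insAt n k p) p \<and> sem (Rv n k x) (insAt n k p) = Rv n k x p"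
proof -
  have A: "N0 n + 1 < A0 n" unfolding A0_def by simp
  have lr: "lamreg n l < p" using lamreg_bound[OF assms(1)] A assms(4) by simp
  have dr: "Dreg n l m < A0 n + 2*(l*(n+1)+m)"
  proof (cases l)
    case 0 then show ?thesis using A by (simp add: Dreg_def)
  next
    case (Suc l') then show ?thesis by (simp add: Dreg_def algebra_simps)
  qed
  show ?thesis
  proof (cases "b = 0")
    case True
    then have ins: "insAt n k p = Mul (lamreg n l) (Dreg n l m)" using RA(2)[OF assms(1-3), of k] assms(4) by simp
    have rv: "Rv n k x p = lamv n x l * Dval n x l m" using RA(1)[OF assms(1-3), of k x] assms(4) True by simp
    show ?thesis using lr dr assms True unfolding ins rv
      by (simp add: R_lamreg RD)
  next
    case False
    then have b1: "b = 1" using assms(3) by simp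
    have ins: "insAt n k p = Add (p - 1) (Dreg1 n l m)" using RA(2)[OF assms(1-3), of k] assms(4) b1 by simp
    have rv: "Rv n k x p = Dval n x (Suc l) m" using RA(1)[OF assms(1-3), of k x] assms(4) b1 by simp
    have pm1: "Rv n k x (p - 1) = lamv n x l * Dval n x l m"
    proof -
      have "p - 1 = A0 n + 2*(l*(n+1)+m) + 0" using assms(4) b1 by simp
      moreover have "Rv n k x (A0 n + 2*(l*(n+1)+m) + 0) = lamv n x l * Dval n x l m"
        using RA(1)[where l=l and n=n and m=m and b=0 and k=k and x=x] assms(1,2) by simp
      ultimately show ?thesis by simp
    qed
    have d1: "Dreg1 n l m < p"
    proof (cases "m = 0")
      case True then show ?thesis using A assms(4) by (simp add: Dreg1_def)
    next
      case False
      have "Dreg n l (m - 1) < A0 n + 2*(l*(n+1)+(m-1))"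
      proof (cases l)
        case 0 then show ?thesis using A by (simp add: Dreg_def)
      next
        case (Suc l') then show ?thesis by (simp add: Dreg_def algebra_simps)
      qed
      then show ?thesis using False assms(4) by (simp add: Dreg1_def)
    qed
    have p1: "p - 1 < p" using assms(4) b1 by simp
    show ?thesis using d1 p1 assms(1,2) unfolding ins rv
      by (simp add: pm1[simplified] RD1 Dstep)
  qed
qed


lemma verB:
  assumes "j < n" "s < k" "b < (2::nat)" "p = B0 n + 2*(j*k+s) + b" "k \<le> n"
  shows "refs_lt (insAt n k p) p \<and> sem (Rv n k x) (insAt n k p) = Rv n k x p"
proof -
  have o: "N0 n + 1 < A0 n" "A0 n \<le> B0 n" using order_facts(1,2)[of n] by auto
  have lr: "lamreg n j < p" using lamreg_bound[OF assms(1)] o assms(4) by simp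
  show ?thesis
  proof (cases "b = 0")
    case True
    then have ins: "insAt n k p = Mul (lamreg n j) (Greg n k j s)" using RB(2)[OF assms(1-3)] assms(4) by simp
    have rv: "Rv n k x p = lamv n x j * Gval n x j s" using RB(1)[OF assms(1-3), of x] assms(4) True by simp
    have gr: "Greg n k j s < p"
    proof (cases s)
      case 0 then show ?thesis using o assms(4) by (simp add: Greg_def)
    next
      case (Suc s') then show ?thesis using assms(4) True by (simp add: Greg_def algebra_simps)
    qed
    show ?thesis using lr gr assms(1,2) unfolding ins rv
      by (simp add: R_lamreg RG)
  next
    case False
    then have b1: "b = 1" using assms(3) by simp
    have ins: "insAt n k p = Sub (Dreg n n (n - s)) (p - 1)" using RB(2)[OF assms(1-3)] assms(4) b1 by simp
    have rv: "Rv n k x p = Gval n x j (Suc s)" using RB(1)[OF assms(1-3), of x] assms(4) b1 by simp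
    have pm1: "Rv n k x (p - 1) = lamv n x j * Gval n x j s"
    proof -
      have "p - 1 = B0 n + 2*(j*k+s) + 0" using assms(4) b1 by simp
      moreover have "Rv n k x (B0 n + 2*(j*k+s) + 0) = lamv n x j * Gval n x j s"
        using RB(1)[where j=j and n=n and s=s and b=0 and k=k and x=x] assms(1,2) by simp
      ultimately show ?thesis by simp
    qed
    have n1: "n - 1 < n" using assms(1) by simp
    have dn: "Dreg n n (n - s) < B0 n"
    proof -
      have "Dreg n n (n - s) = A0 n + 2*((n-1)*(n+1)+(n-s)) + 1" using assms(1) by (simp add: Dreg_def)
      also have "\<dots> < B0 n" by (rule posA(1)[OF n1]) auto
      finally show ?thesis .
    qed
    have p1: "p - 1 < p" using assms(4) b1 by simp
    have sn: "s < n" using assms(2,5) by simp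
    have bp: "B0 n \<le> p" using assms(4) by simp
    show ?thesis using dn p1 bp sn unfolding ins rv
      by (simp add: pm1[simplified] RD Gstep[OF assms(1) sn])
  qed
qed

lemma verW:
  assumes "j < n" "1 \<le> k" "p = W0 n k + j"
  shows "refs_lt (insAt n k p) p \<and> sem (Rv n k x) (insAt n k p) = Rv n k x p"
proof -
  have o: "N0 n + 1 < A0 n" "A0 n \<le> B0 n" "B0 n \<le> W0 n k" using order_facts(1,2)[of n] order_facts(3)[of n k] by auto
  have lr: "lamreg n j < p" using lamreg_bound[OF assms(1)] o assms(3) by simp
  have km: "k - 1 < k" using assms(2) by simp
  have gr: "Greg n k j k < p"
  proof -
    have "Greg n k j k = B0 n + 2*(j*k+(k-1)) + 1" using assms(2) by (simp add: Greg_def)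
    also have "\<dots> < W0 n k" by (rule posB(1)[OF assms(1) km]) simp
    finally show ?thesis using assms(3) by simp
  qed
  show ?thesis using lr gr assms(1) unfolding assms(3) RW[OF assms(1)]
    by (simp add: R_lamreg RG Wv_def)
qed

lemma verC:
  assumes "i < n" "j < n" "b < (3::nat)" "p = C0 n k + 3*(i*n+j) + b"
  shows "refs_lt (insAt n k p) p \<and> sem (Rv n k x) (insAt n k p) = Rv n k x p"
proof -
  have o: "N0 n + 1 < A0 n" "A0 n \<le> B0 n" "B0 n \<le> W0 n k" "W0 n k \<le> C0 n k"
    using order_facts(1,2)[of n] order_facts(3,4)[of n k] by auto
  consider "b = 0" | "b = 1" | "b = 2" using assms(3) by linarith
  then show ?thesis
  proof cases
    case 1
    then have ins: "insAt n k p = Mul (Qreg n i j) (Qreg n i j)" using RC(2)[OF assms(1-3)] assms(4) by simp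
    have rv: "Rv n k x p = Qv n x i j * Qv n x i j" using RC(1)[OF assms(1-3), of k x] assms(4) 1 by simp
    have "Qreg n i j < p" using Qreg_bound[OF assms(1,2)] o assms(4) by simp
    then show ?thesis unfolding ins rv using assms(1,2) by (simp add: R_Qreg)
  next
    case 2
    then have ins: "insAt n k p = Mul (p - 1) (W0 n k + j)" using RC(2)[OF assms(1-3)] assms(4) by simp
    have rv: "Rv n k x p = Qv n x i j * Qv n x i j * Wv n k x j" using RC(1)[OF assms(1-3), of k x] assms(4) 2 by simp
    have pm1: "Rv n k x (p - 1) = Qv n x i j * Qv n x i j"
    proof -
      have "p - 1 = C0 n k + 3*(i*n+j) + 0" using assms(4) 2 by simp
      moreover have "Rv n k x (C0 n k + 3*(i*n+j) + 0) = Qv n x i j * Qv n x i j"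
        using RC(1)[where i=i and n=n and j=j and b=0 and k=k and x=x] assms(1,2) by simp
      ultimately show ?thesis by simp
    qed
    have w: "W0 n k + j < p" using assms(2,4) unfolding C0_def by simp
    have p1: "p - 1 < p" using assms(4) 2 by simp
    show ?thesis using w p1 unfolding ins rv by (simp add: pm1[simplified] RW[OF assms(2)])
  next
    case 3
    then have ins: "insAt n k p = Add (Acc n k i j) (p - 1)" using RC(2)[OF assms(1-3)] assms(4) by simp
    have rv: "Rv n k x p = Cv n k x i j" using RC(1)[OF assms(1-3), of k x] assms(4) 3 by simp
    have pm1: "Rv n k x (p - 1) = Qv n x i j * Qv n x i j * Wv n k x j"
    proof -
      have "p - 1 = C0 n k + 3*(i*n+j) + 1" using assms(4) 3 by simp
      moreover have "Rv n k x (C0 n k + 3*(i*n+j) + 1) = Qv n x i j * Qv n x i j * Wv n k x j"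
        using RC(1)[where i=i and n=n and j=j and b=1 and k=k and x=x] assms(1,2) by simp
      ultimately show ?thesis by simp
    qed
    have ac: "Acc n k i j < p"
    proof (cases j)
      case 0 then show ?thesis using o assms(4) by (simp add: Acc_def)
    next
      case (Suc j') then show ?thesis using assms(4) 3 by (simp add: Acc_def algebra_simps)
    qed
    have p1: "p - 1 < p" using assms(4) 3 by simp
    have cv: "(if j = 0 then 0 else Cv n k x i (j - 1)) + Qv n x i j * Qv n x i j * Wv n k x j = Cv n k x i j"
      by (cases j) (simp_all add: Cv_def)
    show ?thesis using ac p1 assms(1,2) cv unfolding ins rv by (simp add: pm1[simplified] RAcc)
  qed
qed


lemma verify:
  assumes "N0 n \<le> p" "p < LE n k" "1 \<le> k" "k \<le> n"
  shows "refs_lt (insAt n k p) p \<and> sem (Rv n k x) (insAt n k p) = Rv n k x p"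
proof -
  have o: "N0 n + 1 < A0 n" "A0 n \<le> B0 n" "B0 n \<le> W0 n k" "W0 n k \<le> C0 n k" "C0 n k \<le> LE n k"
    using order_facts(1,2)[of n] order_facts(3-5)[of n k] by auto
  have A0e: "A0 n = N0 n + 2" by (simp add: A0_def)
  consider "p = N0 n" | "p = N0 n + 1" | "A0 n \<le> p \<and> p < B0 n" | "B0 n \<le> p \<and> p < W0 n k"
    | "W0 n k \<le> p \<and> p < C0 n k" | "C0 n k \<le> p \<and> p < LE n k"
    using assms(1,2) A0e by linarith
  then show ?thesis
  proof cases
    case 1 then show ?thesis by (simp add: I_N0 R_N0)
  next
    case 2 then show ?thesis using R_N1[of n k x] I_N1[of n k] by simp
  next
    case 3
    have "p < A0 n + (n*(n+1)) * 2" using 3 unfolding B0_def by (simp add: algebra_simps)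
    then have "p - A0 n < (n*(n+1)) * 2" using 3 by linarith
    then obtain c b where cb: "p - A0 n = c * 2 + b" "c < n*(n+1)" "b < 2" by (rule decomp) simp
    from cb(2) obtain l m where lm: "c = l*(n+1) + m" "l < n" "m < n+1" by (rule decomp) simp
    have "p = A0 n + (c*2+b)" using cb(1) 3 by linarith
    also have "\<dots> = A0 n + 2*(l*(n+1)+m) + b" by (simp add: lm(1) algebra_simps)
    finally have pe: "p = A0 n + 2*(l*(n+1)+m) + b" .
    show ?thesis by (rule verA[OF lm(2) _ cb(3) pe]) (use lm in simp)
  next
    case 4
    have "p < B0 n + (n*k) * 2" using 4 unfolding W0_def by (simp add: algebra_simps)
    then have "p - B0 n < (n*k) * 2" using 4 by linarith
    then obtain c b where cb: "p - B0 n = c * 2 + b" "c < n*k" "b < 2" by (rule decomp) simp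
    from cb(2) obtain j s where js: "c = j*k + s" "j < n" "s < k" by (rule decomp) (use assms(3) in simp)
    have "p = B0 n + (c*2+b)" using cb(1) 4 by linarith
    also have "\<dots> = B0 n + 2*(j*k+s) + b" by (simp add: js(1) algebra_simps)
    finally have "p = B0 n + 2*(j*k+s) + b" .
    then show ?thesis by (rule verB[OF js(2,3) cb(3) _ assms(4)])
  next
    case 5
    then have j: "p - W0 n k < n" unfolding C0_def by linarith
    have "p = W0 n k + (p - W0 n k)" using 5 by simp
    then show ?thesis by (rule verW[OF j assms(3)])
  next
    case 6
    have "p < C0 n k + (n*n) * 3" using 6 unfolding LE_def by (simp add: algebra_simps)
    then have "p - C0 n k < (n*n) * 3" using 6 by linarith
    then obtain c b where cb: "p - C0 n k = c * 3 + b" "c < n*n" "b < 3" by (rule decomp) simp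
    have n0: "0 < n" using assms(3,4) by simp
    from cb(2) obtain i j where ij: "c = i*n + j" "i < n" "j < n" by (rule decomp) (use n0 in simp)
    have "p = C0 n k + (c*3+b)" using cb(1) 6 by linarith
    also have "\<dots> = C0 n k + 3*(i*n+j) + b" by (simp add: ij(1) algebra_simps)
    finally have "p = C0 n k + 3*(i*n+j) + b" .
    then show ?thesis by (rule verC[OF ij(2,3) cb(3)])
  qed
qed

definition prog :: "nat \<Rightarrow> nat \<Rightarrow> instr list" where
  "prog n k = map (\<lambda>t. insAt n k (N0 n + t)) [0..<LE n k - N0 n]"

definition outs :: "nat \<Rightarrow> nat \<Rightarrow> nat list" where
  "outs n k = map (\<lambda>i. C0 n k + 3*(i*n+(n-1)) + 2) [0..<n]"

lemma N0_le_LE: "N0 n \<le> LE n k"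
  using order_facts(1,2)[of n] order_facts(3-5)[of n k] by (simp add: A0_def)

lemma exec_prog:
  assumes "length x = N0 n" "1 \<le> k" "k \<le> n"
  shows "exec x (prog n k) = map (Rv n k x) [0..<LE n k]"
proof -
  have x: "x = map (Rv n k x) [0..<N0 n]"
    by (rule nth_equalityI) (simp_all add: assms(1) Rsmall)
  have "exec (map (Rv n k x) [0..<N0 n]) (prog n k) = map (Rv n k x) [0..<N0 n + length (prog n k)]"
  proof (rule exec_R)
    fix t assume "t < length (prog n k)"
    then have t: "t < LE n k - N0 n" by (simp add: prog_def)
    then have "prog n k ! t = insAt n k (N0 n + t)" by (simp add: prog_def)
    then show "refs_lt (prog n k ! t) (N0 n + t) \<and> sem (Rv n k x) (prog n k ! t) = Rv n k x (N0 n + t)"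
      using verify[of n "N0 n + t" k x] t assms by simp
  qed
  moreover have "N0 n + length (prog n k) = LE n k" using N0_le_LE[of n k] by (simp add: prog_def)
  ultimately show ?thesis using x by simp
qed

lemma prog_length: "1 \<le> n \<Longrightarrow> k \<le> n \<Longrightarrow> length (prog n k) \<le> 12 * n * n"
proof -
  assume n: "1 \<le> n" and k: "k \<le> n"
  have "length (prog n k) = 2 + 2*(n*(n+1)) + 2*(n*k) + n + 3*(n*n)"
    by (simp add: prog_def LE_def C0_def W0_def B0_def A0_def)
  also have "\<dots> \<le> 2 + 2*(n*(n+1)) + 2*(n*n) + n + 3*(n*n)" using k by simp
  also have "\<dots> = 7*(n*n) + 3*n + 2" by (simp add: algebra_simps)
  also have "\<dots> \<le> 7*(n*n) + 3*(n*n) + 2*(n*n)"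
  proof -
    have "n \<le> n*n" using n by simp
    moreover have "1 \<le> n*n" using n by simp
    ultimately show ?thesis by linarith
  qed
  finally show ?thesis by simp
qed


lemma mm_lower:
  assumes comp: "slp_computes (2*n*n) (\<lambda>_. True) (matmul_spec n) P os" and n: "1 \<le> n"
  shows "n*n \<le> length P"
proof -
  define c where "c = real (n*n+2)"
  define x where "x = map (\<lambda>r. if r < n*n then real r + 2 else (if (r - n*n) div n = (r - n*n) mod n then c else 0)) [0..<2*n*n]"
  have lx: "length x = 2*n*n" unfolding x_def by simp
  have cpos: "0 < c" unfolding c_def by (simp only: of_nat_0_less_iff)
  have xle: "x ! a \<le> c" if "a < 2*n*n" for a
  proof (cases "a < n*n")
    case True
    then have "a + 2 \<le> n*n+2" by simp
    then have "real (a + 2) \<le> c" unfolding c_def by (rule of_nat_mono)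
    then show ?thesis using that True unfolding x_def by simp
  next
    case False then show ?thesis using that cpos unfolding x_def by simp
  qed
  have xA: "x ! a = real a + 2" if "a < n*n" for a
    using that unfolding x_def by simp
  have xB: "x ! (n*n + l*n + r) = (if l = r then c else 0)" if "l < n" "r < n" for l r
  proof -
    have "l*n + r < n*n" using that by (intro lin_bound)
    then have "n*n + l*n + r < 2*n*n" by simp
    moreover have "(n*n + l*n + r - n*n) div n = l" "(n*n + l*n + r - n*n) mod n = r"
      using that by auto
    ultimately show ?thesis unfolding x_def by simp
  qed
  have mm: "matmul_spec n x ! r = (real r + 2) * c" if r: "r < n*n" for r
  proof -
    have rd: "r div n < n" using r by (simp add: less_mult_imp_div_less)
    have rm: "r mod n < n" using n by simp
    have "matmul_spec n x ! r = (\<Sum>l<n. x ! ((r div n) * n + l) * x ! (n * n + l * n + r mod n))"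
      unfolding matmul_spec_def using r by simp
    also have "\<dots> = (\<Sum>l<n. if l = r mod n then x ! ((r div n) * n + l) * c else 0)"
      by (intro sum.cong refl) (simp add: xB rm)
    also have "\<dots> = x ! ((r div n) * n + r mod n) * c" using rm by (simp add: sum.delta')
    also have "(r div n) * n + r mod n = r" by simp
    also have "x ! r = real r + 2" by (rule xA[OF r])
    finally show ?thesis .
  qed
  have eq: "map (reg (exec x P)) os = matmul_spec n x" using comp lx unfolding slp_computes_def by simp
  then have "length (map (reg (exec x P)) os) = length (matmul_spec n x)" by (rule arg_cong)
  then have los: "length os = n*n" by (simp add: matmul_spec_def)
  have val: "reg (exec x P) (os ! r) = (real r + 2) * c" if "r < n*n" for r
    using arg_cong[OF eq, of "\<lambda>l. l ! r"] that los mm by simp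
  have rng: "os ! r \<in> {2*n*n..<2*n*n + length P}" if r: "r < n*n" for r
  proof -
    have v: "reg (exec x P) (os ! r) = (real r + 2) * c" by (rule val[OF r])
    have gt: "c < (real r + 2) * c" using cpos by simp
    have "os ! r < length (exec x P)"
    proof (rule ccontr)
      assume "\<not> os ! r < length (exec x P)"
      then have "reg (exec x P) (os ! r) = 0" unfolding reg_def by simp
      then show False using v gt cpos by simp
    qed
    then have lt: "os ! r < 2*n*n + length P" using lx by (simp add: length_exec)
    have "\<not> os ! r < 2*n*n"
    proof
      assume a: "os ! r < 2*n*n"
      then have "reg (exec x P) (os ! r) = x ! (os ! r)" unfolding reg_def using lx
        by (simp add: length_exec exec_prefix)
      then have "(real r + 2) * c \<le> c" using xle[OF a] v by simp
      then show False using gt by simp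
    qed
    then show ?thesis using lt by simp
  qed
  have inj: "inj_on (\<lambda>r. os ! r) {..<n*n}"
  proof (rule inj_onI)
    fix r r' assume a: "r \<in> {..<n*n}" "r' \<in> {..<n*n}" "os ! r = os ! r'"
    have "(real r + 2) * c = reg (exec x P) (os ! r)" using val a(1) by simp
    also have "\<dots> = reg (exec x P) (os ! r')" using a(3) by simp
    also have "\<dots> = (real r' + 2) * c" using val a(2) by simp
    finally have "(real r + 2) * c = (real r' + 2) * c" .
    then show "r = r'" using cpos by simp
  qed
  have "card {..<n*n} \<le> card {2*n*n..<2*n*n + length P}"
    by (rule card_inj_on_le[OF inj]) (use rng in auto)
  then show ?thesis by simp
qed


definition outregs :: "nat \<Rightarrow> nat \<Rightarrow> nat list" where
  "outregs n k = map (\<lambda>i. C0 n k + 3*(i*n+(n-1)) + 2) [0..<n]"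

lemma out_correct:
  assumes lx: "length x = 2*n*n + n" and k: "1 \<le> k" "k \<le> n" and v: "valid_input n x"
  shows "map (reg (exec x (prog n k))) (outregs n k) = minor_vector n k x"
proof (rule nth_equalityI)
  show "length (map (reg (exec x (prog n k))) (outregs n k)) = length (minor_vector n k x)"
    by (simp add: outregs_def minor_vector_def)
next
  fix i assume "i < length (map (reg (exec x (prog n k))) (outregs n k))"
  then have i: "i < n" by (simp add: outregs_def)
  have n1: "n - 1 < n" using i by simp
  have lx': "length x = N0 n" using lx by (simp add: N0_def)
  let ?o = "C0 n k + 3*(i*n+(n-1)) + 2"
  have olt: "?o < LE n k" by (rule posC(1)[OF i n1]) simp
  have "reg (exec x (prog n k)) ?o = Rv n k x ?o"
    using olt exec_prog[OF lx' k] by (simp add: reg_def)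
  also have "\<dots> = Cv n k x i (n - 1)"
    using RC(1)[where i=i and n=n and j="n-1" and b=2 and k=k and x=x] i n1 by simp
  also have "\<dots> = (\<Sum>j<n. Qv n x i j * Qv n x i j * Wv n k x j)"
    unfolding Cv_def using i by simp
  also have "\<dots> = (\<Sum>j<n. inQ n x i j * inQ n x i j * inL n x j * coeff (\<Prod>l\<in>{0..<n}-{j}. [:inL n x l, 1:]) (n-k))"
    by (simp add: Qv_def inQ_def Wv_def lamv_def inL_def Gval_def mult.assoc)
  also have "\<dots> = restrict_minor_sum n k i (inX n x)"
    using v i k unfolding valid_input_def by (intro main_math[symmetric]) auto
  finally show "map (reg (exec x (prog n k))) (outregs n k) ! i = minor_vector n k x ! i"
    using i by (simp add: outregs_def minor_vector_def)
qed

theorem mainTheorem11: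
  fixes \<tau> :: real
  assumes "mm_exponent \<tau>"
  shows "\<exists>C. \<forall>n k. 1 \<le> k \<and> k \<le> n \<longrightarrow>
           (\<exists>P outs. slp_computes (2 * n * n + n) (valid_input n) (minor_vector n k) P outs \<and>
                     real (length P) \<le> C * real n powr \<tau>)"
proof -
  obtain C0 where C0: "\<forall>n\<ge>1. \<exists>P outs. slp_computes (2 * n * n) (\<lambda>_. True) (matmul_spec n) P outs \<and> real (length P) \<le> C0 * real n powr \<tau>"
    using assms unfolding mm_exponent_def by blast
  show ?thesis
  proof (intro exI[of _ "12 * C0"] allI impI)
    fix n k :: nat assume nk: "1 \<le> k \<and> k \<le> n"
    then have n: "1 \<le> n" by simp
    obtain P0 os0 where P0: "slp_computes (2 * n * n) (\<lambda>_. True) (matmul_spec n) P0 os0" "real (length P0) \<le> C0 * real n powr \<tau>"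
      using C0 n by blast
    have low: "n * n \<le> length P0" by (rule mm_lower[OF P0(1) n])
    have sc: "slp_computes (2 * n * n + n) (valid_input n) (minor_vector n k) (prog n k) (outregs n k)"
      unfolding slp_computes_def using out_correct nk by blast
    have "real (length (prog n k)) \<le> real (12 * (n * n))"
      using prog_length[OF n, of k] nk by (simp only: of_nat_le_iff mult.assoc)
    also have "\<dots> \<le> 12 * real (length P0)" using of_nat_mono[OF low] by simp
    also have "\<dots> \<le> 12 * C0 * real n powr \<tau>" using P0(2) by simp
    finally show "\<exists>P outs. slp_computes (2 * n * n + n) (valid_input n) (minor_vector n k) P outs \<and>
                     real (length P) \<le> 12 * C0 * real n powr \<tau>" using sc by blast
  qed
qed


end
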